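(* Let $\mathcal{T}$ be a tangle of order $k$ in a connectivity system $(E,\lambda)$, and let $(A, B)$ and $(C, D)$ be two non-sequential $k$-separations of $\lambda$. Then $(A, B)$ is $\mathcal{T}$-equivalent to $(C, D)$ if and only if either $\mathrm{fcl}_{\mathcal{T}}(A)= \mathrm{fcl}_{\mathcal{T}}(C)$ or $\mathrm{fcl}_{\mathcal{T}}(A)= \mathrm{fcl}_{\mathcal{T}}(D)$.
   Context: A connectivity system is a pair $(E,\lambda)$ with $E$ finite and $\lambda$ an integer-valued symmetric submodular function on subsets of $E$. $X$ is $k$-separating if $\lambda(X)\le k$; a $k$-separation is an unordered partition $(X,E-X)$ with $\lambda(X)\le k$. A tangle of order $k$ is a collection $\mathcal T$ of subsets of $E$ with (T1) $\lambda(A)<k$ for $A\in\mathcal T$; (T2) if $\lambda(A)\le k-1$ then $A\in\mathcal T$ or $E-A\in\mathcal T$; (T3) $A\cup B\cup C\ne E$ for $A,B,C\in\mathcal T$; (T4) $E-\{e\}\notin\mathcal T$ for $e\in E$. A set is $\mathcal T$-weak if contained in a member of $\mathcal T$, and $\mathcal T$-strong otherwise. A $\mathcal T$-strong $k$-separating set $X$ is fully closed if $X\cup Y$ is not $k$-separating for every nonempty $\mathcal T$-weak $Y\subseteq E-X$; $\mathrm{fcl}_{\mathcal T}(X)$ is the intersection of all fully closed $k$-separating sets containing $X$. $\mathcal T$-strong $k$-separations $(X,Y),(X',Y')$ are $\mathcal T$-equivalent if $\{\mathrm{fcl}_{\mathcal T}(X),\mathrm{fcl}_{\mathcal T}(Y)\}=\{\mathrm{fcl}_{\mathcal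 T}(X'),\mathrm{fcl}_{\mathcal T}(Y')\}$. A $k$-separating set $X$ is $\mathcal T$-sequential if $E-X$ is $\mathcal T$-strong and $\mathrm{fcl}_{\mathcal T}(E-X)=E$; a $k$-separation is non-sequential if neither of its parts is $\mathcal T$-sequential (such separations are $\mathcal T$-strong). *)

theory Defs
  imports Main
begin

definition connectivity_system :: "'a set \<Rightarrow> ('a set \<Rightarrow> int) \<Rightarrow> bool" where
  "connectivity_system E lam \<longleftrightarrow> finite E \<and>
     (\<forall>X\<subseteq>E. lam X = lam (E - X)) \<and>
     (\<forall>X\<subseteq>E. \<forall>Y\<subseteq>E. lam X + lam Y \<ge> lam (X \<union> Y) + lam (X \<inter> Y))"

definition k_separating :: "('a set \<Rightarrow> int) \<Rightarrow> int \<Rightarrow> 'a set \<Rightarrow> bool" where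
  "k_separating lam k X \<longleftrightarrow> lam X \<le> k"

text \<open>A k-separation (X, Y): a partition of E with X separating. Represented as an
  ordered pair with Y = E - X; symmetry makes the unordered reading equivalent.\<close>
definition k_separation :: "'a set \<Rightarrow> ('a set \<Rightarrow> int) \<Rightarrow> int \<Rightarrow> 'a set \<Rightarrow> 'a set \<Rightarrow> bool" where
  "k_separation E lam k X Y \<longleftrightarrow> X \<subseteq> E \<and> Y = E - X \<and> lam X \<le> k"

definition tangle :: "'a set \<Rightarrow> ('a set \<Rightarrow> int) \<Rightarrow> int \<Rightarrow> 'a set set \<Rightarrow> bool" where
  "tangle E lam k T \<longleftrightarrow>
     (\<forall>A\<in>T. A \<subseteq> E) \<and>
     (\<forall>A\<in>T. lam A < k) \<and>
     (\<forall>A\<subseteq>E. lam A \<le> k - 1 \<longrightarrow> A \<in> T \<or> E - A \<in> T) \<and>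
     (\<forall>A\<in>T. \<forall>B\<in>T. \<forall>C\<in>T. A \<union> B \<union> C \<noteq> E) \<and>
     (\<forall>e\<in>E. E - {e} \<notin> T)"

definition T_weak :: "'a set set \<Rightarrow> 'a set \<Rightarrow> bool" where
  "T_weak T X \<longleftrightarrow> (\<exists>A\<in>T. X \<subseteq> A)"

definition T_strong :: "'a set set \<Rightarrow> 'a set \<Rightarrow> bool" where
  "T_strong T X \<longleftrightarrow> \<not> T_weak T X"

definition fully_closed :: "'a set \<Rightarrow> ('a set \<Rightarrow> int) \<Rightarrow> int \<Rightarrow> 'a set set \<Rightarrow> 'a set \<Rightarrow> bool" where
  "fully_closed E lam k T X \<longleftrightarrow> X \<subseteq> E \<and> T_strong T X \<and> k_separating lam k X \<and>
     (\<forall>Y. Y \<subseteq> E - X \<and> Y \<noteq> {} \<and> T_weak T Y \<longrightarrow> \<not> k_separating lam k (X \<union> Y))"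

text \<open>Intersection of all fully closed k-separating sets containing X (within E;
  the empty intersection is E).\<close>
definition fcl :: "'a set \<Rightarrow> ('a set \<Rightarrow> int) \<Rightarrow> int \<Rightarrow> 'a set set \<Rightarrow> 'a set \<Rightarrow> 'a set" where
  "fcl E lam k T X = E \<inter> \<Inter>{Z. fully_closed E lam k T Z \<and> X \<subseteq> Z}"

definition T_equivalent :: "'a set \<Rightarrow> ('a set \<Rightarrow> int) \<Rightarrow> int \<Rightarrow> 'a set set \<Rightarrow>
    'a set \<Rightarrow> 'a set \<Rightarrow> 'a set \<Rightarrow> 'a set \<Rightarrow> bool" where
  "T_equivalent E lam k T X Y X' Y' \<longleftrightarrow>
     {fcl E lam k T X, fcl E lam k T Y} = {fcl E lam k T X', fcl E lam k T Y'}"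

definition T_sequential :: "'a set \<Rightarrow> ('a set \<Rightarrow> int) \<Rightarrow> int \<Rightarrow> 'a set set \<Rightarrow> 'a set \<Rightarrow> bool" where
  "T_sequential E lam k T X \<longleftrightarrow> X \<subseteq> E \<and> k_separating lam k X \<and>
     T_strong T (E - X) \<and> fcl E lam k T (E - X) = E"

definition non_sequential :: "'a set \<Rightarrow> ('a set \<Rightarrow> int) \<Rightarrow> int \<Rightarrow> 'a set set \<Rightarrow> 'a set \<Rightarrow> 'a set \<Rightarrow> bool" where
  "non_sequential E lam k T X Y \<longleftrightarrow> k_separation E lam k X Y \<and>
     \<not> T_sequential E lam k T X \<and> \<not> T_sequential E lam k T Y"

end

theory Submission
  imports Defs
begin

lemma cs_sym: "connectivity_system E lam \<Longrightarrow> X \<subseteq> E \<Longrightarrow> lam (E - X) = lam X"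
  unfolding connectivity_system_def by (metis (no_types))

lemma cs_E: "connectivity_system E lam \<Longrightarrow> lam E = lam {}"
  using cs_sym[of E lam E] by simp

lemma cs_fin: "connectivity_system E lam \<Longrightarrow> finite E"
  unfolding connectivity_system_def by (elim conjE)

lemma cs_sub: "connectivity_system E lam \<Longrightarrow> X \<subseteq> E \<Longrightarrow> Y \<subseteq> E \<Longrightarrow>
   lam X + lam Y \<ge> lam (X \<union> Y) + lam (X \<inter> Y)"
  unfolding connectivity_system_def by (elim conjE) (drule spec, drule mp, assumption, drule spec, drule mp, assumption)

lemma lam_empty_le:
  assumes cs: "connectivity_system E lam" and X: "X \<subseteq> E"
  shows "lam {} \<le> lam X"
proof -
  have sym: "lam (E - X) = lam X" using cs_sym[OF cs X] .
  have symE: "lam E = lam {}" using cs_E[OF cs] .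
  have "lam X + lam (E - X) \<ge> lam (X \<union> (E - X)) + lam (X \<inter> (E - X))"
    using cs_sub[OF cs X, of "E - X"] by blast
  moreover have "X \<union> (E - X) = E" "X \<inter> (E - X) = {}" using X by auto
  ultimately show ?thesis using sym symE by simp
qed

lemma weak_mono: "T_weak T Y \<Longrightarrow> X \<subseteq> Y \<Longrightarrow> T_weak T X"
  unfolding T_weak_def by blast

lemma strong_mono: "T_strong T X \<Longrightarrow> X \<subseteq> Y \<Longrightarrow> T_strong T Y"
  unfolding T_strong_def T_weak_def by blast

lemma tg_T2: "tangle E lam k T \<Longrightarrow> A \<subseteq> E \<Longrightarrow> lam A \<le> k - 1 \<Longrightarrow> A \<in> T \<or> E - A \<in> T"
  unfolding tangle_def by (elim conjE) (drule spec, drule mp, assumption, drule mp, assumption, assumption)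

lemma tg_T1: "tangle E lam k T \<Longrightarrow> A \<in> T \<Longrightarrow> A \<subseteq> E"
  unfolding tangle_def by (elim conjE) (drule bspec, assumption, assumption)

lemma tg_T3: "tangle E lam k T \<Longrightarrow> A \<in> T \<Longrightarrow> B \<in> T \<Longrightarrow> C \<in> T \<Longrightarrow> A \<union> B \<union> C \<noteq> E"
  unfolding tangle_def by (elim conjE) (drule bspec, assumption, drule bspec, assumption, drule bspec, assumption, assumption)

lemma fc_parts:
  assumes "fully_closed E lam k T Z"
  shows "Z \<subseteq> E" "T_strong T Z" "lam Z \<le> k"
    "\<And>Y. Y \<subseteq> E - Z \<Longrightarrow> Y \<noteq> {} \<Longrightarrow> T_weak T Y \<Longrightarrow> \<not> lam (Z \<union> Y) \<le> k"
  using assms unfolding fully_closed_def k_separating_def by blast+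

lemma keyK:
  assumes cs: "connectivity_system E lam" and tg: "tangle E lam k T"
    and fc: "fully_closed E lam k T Z" and SE: "S \<subseteq> E" and lS: "lam S \<le> k"
    and st: "T_strong T (Z \<inter> S)" and wk: "T_weak T (S - Z)"
  shows "S \<subseteq> Z"
proof (rule ccontr)
  assume ns: "\<not> S \<subseteq> Z"
  have ZE: "Z \<subseteq> E" and lZ: "lam Z \<le> k"
    and cl: "\<And>Y. Y \<subseteq> E - Z \<Longrightarrow> Y \<noteq> {} \<Longrightarrow> T_weak T Y \<Longrightarrow> \<not> lam (Z \<union> Y) \<le> k"
    using fc_parts[OF fc] by blast+
  have "\<not> lam (Z \<union> (S - Z)) \<le> k" using cl[of "S - Z"] ns wk SE by auto
  hence big: "lam (Z \<union> S) > k" by (simp add: Un_Diff_cancel)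
  have "lam Z + lam S \<ge> lam (Z \<union> S) + lam (Z \<inter> S)"
    using cs_sub[OF cs ZE SE] .
  hence small: "lam (Z \<inter> S) \<le> k - 1" using big lZ lS by linarith
  have "Z \<inter> S \<subseteq> E" using ZE by blast
  hence "Z \<inter> S \<in> T \<or> E - (Z \<inter> S) \<in> T" using tg_T2[OF tg _ small] by blast
  moreover have "Z \<inter> S \<notin> T" using st unfolding T_strong_def T_weak_def by blast
  ultimately have "E - (Z \<inter> S) \<in> T" by blast
  hence "T_weak T (E - (Z \<inter> S))" unfolding T_weak_def by (intro bexI[of _ "E - (Z \<inter> S)"]) auto
  hence w2: "T_weak T (E - Z)" by (rule weak_mono) auto
  have "E - Z \<noteq> {}" using ns SE by blast
  hence n1: "\<not> lam (Z \<union> (E - Z)) \<le> k" using cl[of "E - Z"] w2 by blast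
  have eqE: "Z \<union> (E - Z) = E" using ZE by blast
  have n2: "\<not> lam E \<le> k" using n1 unfolding eqE .
  have "lam E = lam {}" using cs_E[OF cs] .
  moreover have "lam {} \<le> lam Z" using lam_empty_le[OF cs ZE] .
  ultimately show False using lZ n2 by linarith
qed

inductive reach for E :: "'a set" and lam :: "'a set \<Rightarrow> int" and k :: int and T :: "'a set set" and X :: "'a set" where
  base: "reach E lam k T X X"
| step: "reach E lam k T X Y \<Longrightarrow> T_weak T W \<Longrightarrow> Y \<union> W \<subseteq> E \<Longrightarrow> lam (Y \<union> W) \<le> k
          \<Longrightarrow> reach E lam k T X (Y \<union> W)"

lemma reach_props:
  "reach E lam k T X Y \<Longrightarrow> X \<subseteq> E \<Longrightarrow> lam X \<le> k \<Longrightarrow> X \<subseteq> Y \<and> Y \<subseteq> E \<and> lam Y \<le> k"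
  by (induction rule: reach.induct) auto

lemma reach_R2:
  assumes cs: "connectivity_system E lam" and tg: "tangle E lam k T"
  shows "reach E lam k T X Y \<Longrightarrow> T_strong T X \<Longrightarrow> X \<subseteq> E \<Longrightarrow> lam X \<le> k
     \<Longrightarrow> fully_closed E lam k T Z \<Longrightarrow> X \<subseteq> Z \<Longrightarrow> Y \<subseteq> Z"
proof (induction rule: reach.induct)
  case base
  then show ?case by simp
next
  case (step Y W)
  have h: "reach E lam k T X Y" "T_weak T W" "Y \<union> W \<subseteq> E" "lam (Y \<union> W) \<le> k"
    using step.hyps by auto
  have p: "T_strong T X" "X \<subseteq> E" "lam X \<le> k" "fully_closed E lam k T Z" "X \<subseteq> Z"
    using step.prems by auto
  have YZ: "Y \<subseteq> Z" by (rule step.IH[OF p(1) p(2) p(3) p(4) p(5)])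
  have XY: "X \<subseteq> Y" using reach_props[OF h(1) p(2) p(3)] by blast
  show ?case
  proof (rule keyK[OF cs tg p(4) h(3) h(4)])
    show "T_strong T (Z \<inter> (Y \<union> W))"
      by (rule strong_mono[OF p(1)]) (use XY YZ in blast)
    show "T_weak T (Y \<union> W - Z)" by (rule weak_mono[OF h(2)]) (use YZ in blast)
  qed
qed

lemma reach_R3:
  assumes cs: "connectivity_system E lam" and tg: "tangle E lam k T"
  shows "reach E lam k T X Y \<Longrightarrow> X \<subseteq> E \<Longrightarrow> lam X \<le> k
     \<Longrightarrow> fully_closed E lam k T Z \<Longrightarrow> T_strong T (E - Y) \<Longrightarrow> E - Y \<subseteq> Z \<Longrightarrow> E - X \<subseteq> Z"
proof (induction rule: reach.induct)
  case base
  then show ?case by simp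
next
  case (step Y W)
  have h: "reach E lam k T X Y" "T_weak T W" "Y \<union> W \<subseteq> E" "lam (Y \<union> W) \<le> k"
    using step.hyps by auto
  have p: "X \<subseteq> E" "lam X \<le> k" "fully_closed E lam k T Z" "T_strong T (E - (Y \<union> W))"
    "E - (Y \<union> W) \<subseteq> Z"
    using step.prems by auto
  have YE: "Y \<subseteq> E" and lY: "lam Y \<le> k" using reach_props[OF h(1) p(1) p(2)] by auto
  have lS: "lam (E - Y) \<le> k" using cs_sym[OF cs YE] lY by simp
  have sub: "E - Y \<subseteq> Z"
  proof (rule keyK[OF cs tg p(3) _ lS])
    show "E - Y \<subseteq> E" by blast
    have "E - (Y \<union> W) \<subseteq> Z \<inter> (E - Y)" using p(5) by blast
    thus "T_strong T (Z \<inter> (E - Y))" by (rule strong_mono[OF p(4)])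
    have "E - Y - Z \<subseteq> W" using p(5) by blast
    thus "T_weak T (E - Y - Z)" by (rule weak_mono[OF h(2)])
  qed
  have "E - (Y \<union> W) \<subseteq> E - Y" by blast
  hence st: "T_strong T (E - Y)" by (rule strong_mono[OF p(4)])
  show ?case by (rule step.IH[OF p(1) p(2) p(3) st sub])
qed

lemma exists_fc:
  assumes cs: "connectivity_system E lam" and XE: "X \<subseteq> E" and lX: "lam X \<le> k"
    and sX: "T_strong T X"
  shows "\<exists>Y. reach E lam k T X Y \<and> fully_closed E lam k T Y"
proof -
  define F where "F = {Y. reach E lam k T X Y}"
  have finE: "finite E" using cs_fin[OF cs] .
  have FP: "F \<subseteq> Pow E" using reach_props XE lX unfolding F_def by blast
  have finF: "finite F" using finite_subset[OF FP] finE by blast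
  have "X \<in> F" unfolding F_def by (simp add: reach.base)
  define m where "m = Max (card ` F)"
  have "m \<in> card ` F" unfolding m_def using finF \<open>X \<in> F\<close> by (intro Max_in) auto
  then obtain Y where YF: "Y \<in> F" and cY: "card Y = m" by blast
  have maxY: "\<And>Y'. Y' \<in> F \<Longrightarrow> card Y' \<le> card Y"
    using cY finF unfolding m_def by auto
  have rY: "reach E lam k T X Y" using YF unfolding F_def by simp
  have YE: "Y \<subseteq> E" and lY: "lam Y \<le> k" and XY: "X \<subseteq> Y"
    using reach_props[OF rY XE lX] by auto
  have "fully_closed E lam k T Y"
    unfolding fully_closed_def k_separating_def
  proof (intro conjI allI impI)
    show "Y \<subseteq> E" by fact
    show "T_strong T Y" using strong_mono[OF sX XY] .
    show "lam Y \<le> k" by fact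
    fix W assume W: "W \<subseteq> E - Y \<and> W \<noteq> {} \<and> T_weak T W"
    show "\<not> lam (Y \<union> W) \<le> k"
    proof
      assume l: "lam (Y \<union> W) \<le> k"
      have "reach E lam k T X (Y \<union> W)" using reach.step[OF rY _ _ l] W YE by blast
      hence "Y \<union> W \<in> F" unfolding F_def by simp
      hence "card (Y \<union> W) \<le> card Y" using maxY by blast
      moreover have "Y \<union> W \<subseteq> E" using W YE by blast
      hence fin: "finite (Y \<union> W)" using finE by (rule finite_subset)
      obtain w where "w \<in> W" using W by blast
      hence "w \<notin> Y" using W by blast
      hence ps: "Y \<subset> Y \<union> W" using \<open>w \<in> W\<close> by blast
      have "card Y < card (Y \<union> W)" by (rule psubset_card_mono[OF fin ps])
      thus False using \<open>card (Y \<union> W) \<le> card Y\<close> by linarith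
    qed
  qed
  thus ?thesis using rY by blast
qed

lemma fcl_eq:
  assumes cs: "connectivity_system E lam" and tg: "tangle E lam k T"
    and XE: "X \<subseteq> E" and lX: "lam X \<le> k" and sX: "T_strong T X"
    and rY: "reach E lam k T X Y" and fY: "fully_closed E lam k T Y"
  shows "fcl E lam k T X = Y"
proof -
  have YE: "Y \<subseteq> E" and XY: "X \<subseteq> Y" using reach_props[OF rY XE lX] by auto
  have "\<And>Z. fully_closed E lam k T Z \<Longrightarrow> X \<subseteq> Z \<Longrightarrow> Y \<subseteq> Z"
    using reach_R2[OF cs tg rY sX XE lX] by blast
  thus ?thesis unfolding fcl_def using YE XY fY by blast
qed

lemma key:
  assumes cs: "connectivity_system E lam" and tg: "tangle E lam k T"
    and XE: "X \<subseteq> E" and lX: "lam X \<le> k" and sX: "T_strong T X"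
    and ne: "fcl E lam k T X \<noteq> E"
  shows "fcl E lam k T (E - X) = fcl E lam k T (E - fcl E lam k T X)"
proof -
  obtain Y where rY: "reach E lam k T X Y" and fY: "fully_closed E lam k T Y"
    using exists_fc[OF cs XE lX sX] by blast
  have eq: "fcl E lam k T X = Y" using fcl_eq[OF cs tg XE lX sX rY fY] .
  have YE: "Y \<subseteq> E" and XY: "X \<subseteq> Y" and lY: "lam Y \<le> k"
    using reach_props[OF rY XE lX] by auto
  have lE: "lam E \<le> k"
  proof -
    have "lam E = lam {}" using cs_E[OF cs] .
    thus ?thesis using lam_empty_le[OF cs YE] lY by simp
  qed
  have sc: "T_strong T (E - Y)"
  proof (rule ccontr)
    assume "\<not> T_strong T (E - Y)"
    hence w: "T_weak T (E - Y)" unfolding T_strong_def by simp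
    have "E \<subseteq> Y"
    proof (rule keyK[OF cs tg fY subset_refl lE _ w])
      show "T_strong T (Y \<inter> E)" by (rule strong_mono[OF sX]) (use XY YE in blast)
    qed
    thus False using ne eq YE by blast
  qed
  have "{Z. fully_closed E lam k T Z \<and> E - X \<subseteq> Z} = {Z. fully_closed E lam k T Z \<and> E - Y \<subseteq> Z}"
  proof (intro Collect_cong iffI conjI)
    fix Z assume "fully_closed E lam k T Z \<and> E - X \<subseteq> Z"
    thus "fully_closed E lam k T Z" "E - Y \<subseteq> Z" using XY by auto
  next
    fix Z assume a: "fully_closed E lam k T Z \<and> E - Y \<subseteq> Z"
    thus "fully_closed E lam k T Z" by simp
    show "E - X \<subseteq> Z" using reach_R3[OF cs tg rY XE lX _ sc] a by blast
  qed
  hence "fcl E lam k T (E - X) = fcl E lam k T (E - Y)" unfolding fcl_def by simp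
  thus ?thesis using eq by simp
qed

lemma weak_seq:
  assumes cs: "connectivity_system E lam" and tg: "tangle E lam k T"
    and XE: "X \<subseteq> E" and lX: "lam X \<le> k" and wX: "T_weak T X"
  shows "T_sequential E lam k T X"
  unfolding T_sequential_def k_separating_def
proof (intro conjI)
  show "X \<subseteq> E" "lam X \<le> k" by fact+
  show sc: "T_strong T (E - X)"
  proof (rule ccontr)
    assume "\<not> T_strong T (E - X)"
    then obtain M2 where "M2 \<in> T" "E - X \<subseteq> M2" unfolding T_strong_def T_weak_def by blast
    moreover obtain M1 where "M1 \<in> T" "X \<subseteq> M1" using wX unfolding T_weak_def by blast
    ultimately have "M1 \<union> M2 \<union> M2 \<noteq> E" "M1 \<subseteq> E" "M2 \<subseteq> E"
      using tg_T3[OF tg] tg_T1[OF tg] by blast+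
    moreover have "E \<subseteq> M1 \<union> M2 \<union> M2" using \<open>X \<subseteq> M1\<close> \<open>E - X \<subseteq> M2\<close> by blast
    ultimately show False by blast
  qed
  have lE: "lam E \<le> k"
  proof -
    have "lam E = lam {}" using cs_E[OF cs] .
    thus ?thesis using lam_empty_le[OF cs XE] lX by simp
  qed
  have all: "\<And>Z. fully_closed E lam k T Z \<Longrightarrow> E - X \<subseteq> Z \<Longrightarrow> E \<subseteq> Z"
  proof -
    fix Z assume f: "fully_closed E lam k T Z" and s: "E - X \<subseteq> Z"
    have "E - Z \<subseteq> X" using s by blast
    hence w: "T_weak T (E - Z)" by (rule weak_mono[OF wX])
    have "T_strong T (Z \<inter> E)" by (rule strong_mono[OF sc]) (use s in blast)
    thus "E \<subseteq> Z"
      by (rule keyK[OF cs tg f subset_refl lE _ w])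
  qed
  have "E \<subseteq> \<Inter>{Z. fully_closed E lam k T Z \<and> E - X \<subseteq> Z}"
    by (rule Inter_greatest) (use all in blast)
  thus "fcl E lam k T (E - X) = E" unfolding fcl_def by (rule Int_absorb2)
qed

lemma ns_facts:
  assumes cs: "connectivity_system E lam" and tg: "tangle E lam k T"
    and ns: "non_sequential E lam k T A B"
  shows "fcl E lam k T B = fcl E lam k T (E - fcl E lam k T A)"
proof -
  have AE: "A \<subseteq> E" and BA: "B = E - A" and lA: "lam A \<le> k"
    and nA: "\<not> T_sequential E lam k T A" and nB: "\<not> T_sequential E lam k T B"
    using ns unfolding non_sequential_def k_separation_def by auto
  have sA: "T_strong T A" using weak_seq[OF cs tg AE lA] nA unfolding T_strong_def by blast
  have AB: "E - B = A" using BA AE by blast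
  have "fcl E lam k T A \<noteq> E"
  proof
    assume "fcl E lam k T A = E"
    moreover have "B \<subseteq> E" "lam B \<le> k" using cs_sym[OF cs AE] lA BA by auto
    ultimately have "T_sequential E lam k T B" unfolding T_sequential_def k_separating_def AB
      using sA by blast
    thus False using nB by simp
  qed
  thus ?thesis using key[OF cs tg AE lA sA] BA by simp
qed

lemma ns_swap:
  assumes cs: "connectivity_system E lam" and ns: "non_sequential E lam k T A B"
  shows "non_sequential E lam k T B A"
proof -
  have AE: "A \<subseteq> E" and BA: "B = E - A" and lA: "lam A \<le> k"
    and nA: "\<not> T_sequential E lam k T A" and nB: "\<not> T_sequential E lam k T B"
    using ns unfolding non_sequential_def k_separation_def by auto
  have "A = E - B" using AE BA by blast
  moreover have "lam B \<le> k" using cs_sym[OF cs AE] lA BA by simp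
  ultimately show ?thesis unfolding non_sequential_def k_separation_def using nA nB BA by auto
qed

theorem lemma3p7:
  fixes E :: "'a set" and lam :: "'a set \<Rightarrow> int" and k :: int and T :: "'a set set"
    and A B C D :: "'a set"
  assumes "connectivity_system E lam"
    and "tangle E lam k T"
    and "non_sequential E lam k T A B"
    and "non_sequential E lam k T C D"
  shows "T_equivalent E lam k T A B C D \<longleftrightarrow>
         (fcl E lam k T A = fcl E lam k T C \<or> fcl E lam k T A = fcl E lam k T D)"
proof -
  have b: "fcl E lam k T B = fcl E lam k T (E - fcl E lam k T A)"
    using ns_facts[OF assms(1,2,3)] .
  have d: "fcl E lam k T D = fcl E lam k T (E - fcl E lam k T C)"
    using ns_facts[OF assms(1,2,4)] .
  have c: "fcl E lam k T C = fcl E lam k T (E - fcl E lam k T D)"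
    using ns_facts[OF assms(1,2) ns_swap[OF assms(1,4)]] .
  show ?thesis unfolding T_equivalent_def
  proof
    assume h: "{fcl E lam k T A, fcl E lam k T B} = {fcl E lam k T C, fcl E lam k T D}"
    have "fcl E lam k T A \<in> {fcl E lam k T A, fcl E lam k T B}" by simp
    hence "fcl E lam k T A \<in> {fcl E lam k T C, fcl E lam k T D}" by (simp only: h)
    thus "fcl E lam k T A = fcl E lam k T C \<or> fcl E lam k T A = fcl E lam k T D"
      by simp
  next
    assume "fcl E lam k T A = fcl E lam k T C \<or> fcl E lam k T A = fcl E lam k T D"
    thus "{fcl E lam k T A, fcl E lam k T B} = {fcl E lam k T C, fcl E lam k T D}"
    proof
      assume e: "fcl E lam k T A = fcl E lam k T C"
      have "fcl E lam k T B = fcl E lam k T D" unfolding b d e ..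
      thus ?thesis using e by (simp only:)
    next
      assume e: "fcl E lam k T A = fcl E lam k T D"
      have "fcl E lam k T B = fcl E lam k T C" unfolding b e c[symmetric] ..
      thus ?thesis using e by (simp only: insert_commute)
    qed
  qed
qed

end
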